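(* Let $\mathcal D_{\mathrm{cost}}$ be a distribution on $\mathbb R_{\ge0}$ with mean $1$, let $n\ge1$, and let $x_1,\dots,x_n$ be i.i.d. from $\mathcal D_{\mathrm{cost}}$. Let $\Delta(x_1,\dots,x_n)$ be the minimum number of the $x_i$ that must be removed so that the sum of the remaining ones is at most $n$. Then $$\mathbb E[\Delta(x_1,\dots,x_n)]\le5\sqrt n.$$ *)

theory Defs
  imports "HOL-Probability.Probability"
begin

text \<open>Minimum number of the values x 0, ..., x (n-1) that must be removed so that
  the sum of the remaining ones is at most n. (Removing all of them always works.)\<close>
definition removal_number :: "nat \<Rightarrow> (nat \<Rightarrow> real) \<Rightarrow> nat" where
  "removal_number n x =
     (LEAST k. \<exists>S. S \<subseteq> {..<n} \<and> card S = k \<and> (\<Sum>i\<in>{..<n} - S. x i) \<le> real n)"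

end

theory Submission
  imports Defs
begin


lemma removal_le_n: "removal_number n x \<le> n"
  unfolding removal_number_def
  by (rule Least_le) (rule exI[of _ "{..<n}"], simp)

lemma removal_le:
  fixes x :: "nat \<Rightarrow> real" and k :: nat
  assumes n: "n \<ge> 1" and H: "\<And>q. q > 0 \<Longrightarrow> (\<Sum>i<n. min (x i) q - 1) \<le> real k * q"
  shows "removal_number n x \<le> k"
proof (cases "k \<ge> n")
  case True
  then show ?thesis using removal_le_n[of n x] by simp
next
  case False
  define I where "I = {..<n}"
  define A where "A = x ` I"
  define Ps where "Ps = {v \<in> A. k \<le> card {i\<in>I. v \<le> x i}}"
  have finA: "finite A" "A \<noteq> {}" using n by (auto simp: A_def I_def lessThan_empty_iff)
  have "Min A \<in> Ps"
  proof -
    have "{i\<in>I. Min A \<le> x i} = I" using finA by (auto simp: A_def)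
    then show ?thesis using finA False by (auto simp: Ps_def I_def)
  qed
  have finP: "finite Ps" using finA by (auto simp: Ps_def)
  define q where "q = Max Ps"
  have qP: "q \<in> Ps" using finP \<open>Min A \<in> Ps\<close> unfolding q_def by (intro Max_in) auto
  have ge: "k \<le> card {i\<in>I. q \<le> x i}" using qP by (auto simp: Ps_def)
  define G where "G = {i\<in>I. q < x i}"
  define E where "E = {i\<in>I. x i = q}"
  have finI: "finite I" by (simp add: I_def)
  have gt: "card G \<le> k"
  proof (rule ccontr)
    assume "\<not> card G \<le> k"
    then have "G \<noteq> {}" by auto
    have finG: "finite G" using finI by (simp add: G_def)
    define v where "v = Min (x ` G)"
    have vin: "v \<in> x ` G" unfolding v_def using finG \<open>G \<noteq> {}\<close> by (intro Min_in) auto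
    then have "v \<in> A" "v > q" by (auto simp: A_def G_def)
    have "{i\<in>I. v \<le> x i} = G"
    proof
      show "{i\<in>I. v \<le> x i} \<subseteq> G" using \<open>v > q\<close> by (auto simp: G_def)
      show "G \<subseteq> {i\<in>I. v \<le> x i}" using finG by (auto simp: v_def G_def)
    qed
    then have "v \<in> Ps" using \<open>v \<in> A\<close> \<open>\<not> card G \<le> k\<close> by (auto simp: Ps_def)
    then have "v \<le> q" unfolding q_def using finP by simp
    then show False using \<open>v > q\<close> by simp
  qed
  have splitGE: "{i\<in>I. q \<le> x i} = G \<union> E" "G \<inter> E = {}" by (auto simp: G_def E_def)
  have finGE: "finite G" "finite E" using finI by (auto simp: G_def E_def)
  have "k - card G \<le> card E" using ge splitGE finGE by (simp add: card_Un_disjoint)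
  then obtain T where T: "T \<subseteq> E" "card T = k - card G" "finite T"
    by (rule obtain_subset_with_card_n)
  define S where "S = G \<union> T"
  have cardS: "card S = k" using T gt splitGE finGE unfolding S_def
    by (subst card_Un_disjoint) auto
  have SI: "S \<subseteq> I" using T by (auto simp: S_def G_def E_def)
  have onS: "\<And>i. i \<in> S \<Longrightarrow> min (x i) q = q" using T by (auto simp: S_def G_def E_def)
  have offS: "\<And>i. i \<in> I - S \<Longrightarrow> x i \<le> q" by (auto simp: S_def G_def)
  have "(\<Sum>i\<in>I. min (x i) q) = (\<Sum>i\<in>S. min (x i) q) + (\<Sum>i\<in>I - S. min (x i) q)"
    using SI finI by (metis add.commute sum.subset_diff)
  also have "(\<Sum>i\<in>S. min (x i) q) = real k * q" using onS cardS by simp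
  also have "(\<Sum>i\<in>I - S. min (x i) q) = (\<Sum>i\<in>I - S. x i)"
    using offS by (intro sum.cong) auto
  finally have eq: "(\<Sum>i\<in>I - S. x i) = (\<Sum>i\<in>I. min (x i) q) - real k * q" by simp
  have rem: "(\<Sum>i\<in>I - S. x i) \<le> real n"
  proof (cases "q > 0")
    case True
    from H[OF True] have "(\<Sum>i\<in>I. min (x i) q) - real n \<le> real k * q"
      by (simp add: sum_subtractf I_def)
    then show ?thesis using eq by simp
  next
    case False
    have "(\<Sum>i\<in>I - S. x i) \<le> (\<Sum>i\<in>I - S. 0)" using offS False
      by (intro sum_mono) force
    then show ?thesis by simp
  qed
  show ?thesis unfolding removal_number_def
    by (rule Least_le) (rule exI[of _ S], use SI cardS rem in \<open>auto simp: I_def\<close>)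
qed

definition gQ :: "real \<Rightarrow> real \<Rightarrow> real" where "gQ Q y = min (max y 0) Q"

lemma exists_m:
  fixes q :: real
  assumes "1 \<le> M" "1 \<le> q" "q \<le> 4^M"
  shows "\<exists>m\<in>{1..M}. 4^(m-1) \<le> q \<and> q \<le> (4::real)^m"
  using assms
proof (induction M rule: nat_induct_at_least)
  case base
  then show ?case by auto
next
  case (Suc M)
  show ?case
  proof (cases "q \<le> 4^M")
    case True
    with Suc.IH Suc.prems show ?thesis by fastforce
  next
    case False
    then show ?thesis using Suc.prems by (intro bexI[of _ "Suc M"]) auto
  qed
qed

lemma pointwise:
  fixes x :: "nat \<Rightarrow> real" and c :: "nat \<Rightarrow> real" and M :: nat
  assumes n: "n \<ge> 1" and M: "M \<ge> 1" and c_le: "\<And>m. c m \<le> 1"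
  shows "real (removal_number n x) \<le> 1 + ((\<Sum>m\<in>{1..M}. 4 / 4^m * max 0 (\<Sum>i<n. gQ (4^m) (x i) - c m))
     + (\<Sum>i<n. min (max (x i) 0 / 4^M) 1))"
proof -
  define T1 where "T1 m = 4 / 4^m * max 0 (\<Sum>i<n. gQ (4^m) (x i) - c m)" for m
  define T2 where "T2 = (\<Sum>i<n. min (max (x i) 0 / 4^M) (1::real))"
  define B where "B = (\<Sum>m\<in>{1..M}. T1 m) + T2"
  have T1nn: "T1 m \<ge> 0" for m by (simp add: T1_def)
  have T2nn: "T2 \<ge> 0" unfolding T2_def by (intro sum_nonneg) auto
  have Bnn: "B \<ge> 0" unfolding B_def using T1nn T2nn by (simp add: sum_nonneg)
  have key: "(\<Sum>i<n. min (x i) q - 1) \<le> B * q" if q: "q > 0" for q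
  proof -
    consider "q < 1" | "1 \<le> q" "q \<le> 4^M" | "q > 4^M" by linarith
    then show ?thesis
    proof cases
      case 1
      have "(\<Sum>i<n. min (x i) q - 1) \<le> (\<Sum>i<n. (0::real))"
        using 1 by (intro sum_mono) auto
      then show ?thesis using Bnn q by (simp add: order.trans[OF _ mult_nonneg_nonneg])
    next
      case 2
      then obtain m where m: "m \<in> {1..M}" "4^(m-1) \<le> q" "q \<le> (4::real)^m"
        using exists_m[OF M] by blast
      have "(\<Sum>i<n. min (x i) q - 1) \<le> (\<Sum>i<n. gQ (4^m) (x i) - c m)"
      proof (intro sum_mono)
        fix i
        have "min (x i) q \<le> min (max (x i) 0) (4^m)" using m(3) by (auto simp: min_def max_def)
        then show "min (x i) q - 1 \<le> gQ (4^m) (x i) - c m" using c_le[of m] unfolding gQ_def by linarith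
      qed
      also have "\<dots> \<le> max 0 (\<Sum>i<n. gQ (4^m) (x i) - c m)" by simp
      also have "\<dots> = q * T1 m * (4^m / (4 * q))"
        using q by (simp add: T1_def field_simps)
      also have "\<dots> \<le> q * T1 m * 1"
      proof (intro mult_left_mono)
        have "(4::real)^m = 4 * 4^(m-1)" using m by (cases m) auto
        then show "4 ^ m / (4 * q) \<le> (1::real)" using m q by (simp add: field_simps)
        show "0 \<le> q * T1 m" using q T1nn by simp
      qed
      also have "\<dots> \<le> q * B"
      proof -
        have "T1 m \<le> (\<Sum>m\<in>{1..M}. T1 m)" using m T1nn by (intro member_le_sum) auto
        then have "T1 m \<le> B" using T2nn by (simp add: B_def)
        then show ?thesis using q by simp
      qed
      finally show ?thesis by (simp add: mult.commute)
    next
      case 3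
      have "(\<Sum>i<n. min (x i) q - 1) \<le> (\<Sum>i<n. q * min (max (x i) 0 / 4^M) 1)"
      proof (intro sum_mono)
        fix i
        have p: "(0::real) < 4^M" by simp
        show "min (x i) q - 1 \<le> q * min (max (x i) 0 / 4^M) 1"
        proof (cases "x i \<le> 0")
          case True then show ?thesis using q by auto
        next
          case False
          have "x i \<le> q * (x i / 4^M)" using 3 False p
            by (simp add: field_simps mult_right_mono less_imp_le)
          then show ?thesis using False q by (auto simp: min_def)
        qed
      qed
      also have "\<dots> = q * T2" by (simp add: T2_def sum_distrib_left)
      also have "\<dots> \<le> q * B" using q by (simp add: B_def sum_nonneg T1nn)
      finally show ?thesis by (simp add: mult.commute)
    qed
  qed
  define k where "k = nat \<lceil>B\<rceil>"
  have Bk: "B \<le> real k" unfolding k_def by linarith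
  have "removal_number n x \<le> k"
  proof (rule removal_le[OF n])
    fix q :: real assume "q > 0"
    then show "(\<Sum>i<n. min (x i) q - 1) \<le> real k * q"
      using key[of q] Bk by (meson mult_right_mono order.trans less_imp_le)
  qed
  then have "real (removal_number n x) \<le> real k" by simp
  also have "real k \<le> 1 + B" unfolding k_def using Bnn by linarith
  finally show ?thesis by (simp add: B_def T1_def T2_def)
qed



lemma int_quad:
  fixes f :: "'a \<Rightarrow> real"
  assumes "prob_space M" "integrable M f" "integrable M (\<lambda>x. (f x)^2)"
  shows "(\<integral>x. a * (f x)^2 + b + d * f x \<partial>M) = a * (\<integral>x. (f x)^2 \<partial>M) + b + d * (\<integral>x. f x \<partial>M)"
proof -
  interpret prob_space M by fact
  show ?thesis using assms(2,3) by (simp add: prob_space)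
qed

lemma bounded_int:
  fixes h :: "'a \<Rightarrow> real"
  assumes "prob_space M" "h \<in> borel_measurable M" "\<And>y. \<bar>h y\<bar> \<le> K"
  shows "integrable M h"
proof -
  interpret prob_space M by fact
  show ?thesis using assms(2,3) by (intro integrable_const_bound[where B=K]) auto
qed

locale Dsetup =
  fixes D :: "real measure" and n :: nat
  assumes D: "prob_space D" and sD: "sets D = sets borel"
begin

abbreviation "P \<equiv> PiM {..<n} (\<lambda>_. D)"

lemma probP: "prob_space P" by (rule prob_space_PiM) (simp add: D)

lemma meas_D: fixes h :: "real \<Rightarrow> real" assumes "h \<in> borel_measurable borel" shows "h \<in> borel_measurable D"
  by (rule ssubst[OF measurable_cong_sets[OF sD refl]]) (rule assms)

lemma meas_comp: fixes h :: "real \<Rightarrow> real" assumes "h \<in> borel_measurable borel" "i < n" shows "(\<lambda>x. h (x i)) \<in> borel_measurable P"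
  using measurable_compose[OF measurable_component_singleton[of i "{..<n}" "\<lambda>_. D"] meas_D[OF assms(1)]] assms(2) by simp

lemma marg:
  fixes h :: "real \<Rightarrow> real"
  assumes h: "h \<in> borel_measurable borel" and i: "i < n"
  shows "(\<integral>x. h (x i) \<partial>P) = (\<integral>y. h y \<partial>D)"
proof -
  have "(\<integral>x. h (x i) \<partial>P) = integral\<^sup>L (distr P D (\<lambda>x. x i)) h"
    by (rule integral_distr[of "\<lambda>x. x i" P D h, symmetric]) (use i meas_D[OF h] in auto)
  also have "distr P D (\<lambda>x. x i) = D" using i D by (intro distr_PiM_component) auto
  finally show ?thesis .
qed

lemma cross:
  fixes f g :: "real \<Rightarrow> real"
  assumes f: "f \<in> borel_measurable borel" "\<And>y. \<bar>f y\<bar> \<le> K"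
    and g: "g \<in> borel_measurable borel" "\<And>y. \<bar>g y\<bar> \<le> K"
    and ij: "i < n" "j < n" "i \<noteq> j"
  shows "(\<integral>x. f (x i) * g (x j) \<partial>P) = (\<integral>y. f y \<partial>D) * (\<integral>y. g y \<partial>D)"
proof -
  interpret product_sigma_finite "\<lambda>_. D"
    unfolding product_sigma_finite_def using D by (simp add: prob_space_imp_sigma_finite)
  define F where "F k = (if k = i then f else if k = j then g else (\<lambda>_. 1))" for k
  have intF: "integrable D (F k)" for k
    using bounded_int[OF D meas_D[OF f(1)] f(2)] bounded_int[OF D meas_D[OF g(1)] g(2)]
      finite_measure.integrable_const[OF prob_space.finite_measure[OF D], of "1::real"] by (simp add: F_def)
  have split: "{..<n} = insert i (insert j ({..<n} - {i,j}))" using ij by auto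
  have prodeq: "(\<Prod>k\<in>{..<n}. F k (x k)) = f (x i) * g (x j)" for x
  proof -
    have "(\<Prod>k\<in>{..<n}. F k (x k)) = (\<Prod>k\<in>insert i (insert j ({..<n} - {i,j})). F k (x k))"
      using split by simp
    also have "\<dots> = F i (x i) * (F j (x j) * (\<Prod>k\<in>{..<n} - {i,j}. F k (x k)))"
      using ij by simp
    also have "(\<Prod>k\<in>{..<n} - {i,j}. F k (x k)) = 1" by (intro prod.neutral) (auto simp: F_def)
    finally show ?thesis using ij by (simp add: F_def)
  qed
  have "(\<integral>x. f (x i) * g (x j) \<partial>P) = (\<integral>x. (\<Prod>k\<in>{..<n}. F k (x k)) \<partial>P)"
    by (simp only: prodeq)
  also have "\<dots> = (\<Prod>k\<in>{..<n}. integral\<^sup>L D (F k))"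
    by (rule product_integral_prod) (auto simp: intF)
  also have "\<dots> = integral\<^sup>L D (F i) * (integral\<^sup>L D (F j) * (\<Prod>k\<in>{..<n} - {i,j}. integral\<^sup>L D (F k)))"
    using ij by (subst split) simp
  also have "(\<Prod>k\<in>{..<n} - {i,j}. integral\<^sup>L D (F k)) = 1"
    by (intro prod.neutral) (auto simp: F_def prob_space.prob_space[OF D])
  finally show ?thesis using ij by (simp add: F_def)
qed

lemma sumsq:
  fixes h :: "real \<Rightarrow> real"
  assumes h: "h \<in> borel_measurable borel" "\<And>y. \<bar>h y\<bar> \<le> K" and h0: "(\<integral>y. h y \<partial>D) = 0"
  shows "(\<integral>x. (\<Sum>i<n. h (x i))^2 \<partial>P) = real n * (\<integral>y. (h y)^2 \<partial>D)"
    and "(\<integral>x. (\<Sum>i<n. h (x i)) \<partial>P) = 0"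
    and "integrable P (\<lambda>x. (\<Sum>i<n. h (x i))^2)"
    and "integrable P (\<lambda>x. (\<Sum>i<n. h (x i)))"
proof -
  have K: "K \<ge> 0" using h(2)[of 0] by simp
  have intij: "integrable P (\<lambda>x. h (x i) * h (x j))" if "i < n" "j < n" for i j
  proof (rule bounded_int[OF probP, where K="K*K"])
    show "(\<lambda>x. h (x i) * h (x j)) \<in> borel_measurable P"
      using meas_comp[OF h(1) that(1)] meas_comp[OF h(1) that(2)] by simp
    fix x show "\<bar>h (x i) * h (x j)\<bar> \<le> K * K"
      unfolding abs_mult using h(2) K by (intro mult_mono) auto
  qed
  have inti: "integrable P (\<lambda>x. h (x i))" if "i < n" for i
    using bounded_int[OF probP meas_comp[OF h(1) that] h(2)] .
  have sq: "(\<Sum>i<n. h (x i))^2 = (\<Sum>i<n. \<Sum>j<n. h (x i) * h (x j))" for x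
    by (simp add: power2_eq_square sum_product)
  show "integrable P (\<lambda>x. (\<Sum>i<n. h (x i))^2)"
    unfolding sq apply (rule Bochner_Integration.integrable_sum) apply (rule Bochner_Integration.integrable_sum) apply (rule intij) by auto
  show "integrable P (\<lambda>x. (\<Sum>i<n. h (x i)))"
    by (intro Bochner_Integration.integrable_sum inti) auto
  show "(\<integral>x. (\<Sum>i<n. h (x i)) \<partial>P) = 0"
    using inti by (simp add: Bochner_Integration.integral_sum marg[OF h(1)] h0)
  have hh: "(\<lambda>y. h y * h y) \<in> borel_measurable borel" using h(1) by simp
  have "(\<integral>x. (\<Sum>i<n. h (x i))^2 \<partial>P) = (\<Sum>i<n. \<Sum>j<n. \<integral>x. h (x i) * h (x j) \<partial>P)"
    unfolding sq
    apply (subst Bochner_Integration.integral_sum)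
     apply (rule Bochner_Integration.integrable_sum, rule intij, simp, simp)
    apply (rule sum.cong[OF refl])
    apply (rule Bochner_Integration.integral_sum)
    apply (rule intij) by auto
  also have "\<dots> = (\<Sum>i<n. \<Sum>j<n. if j = i then (\<integral>y. (h y)^2 \<partial>D) else 0)"
  proof (intro sum.cong refl)
    fix i j assume "i \<in> {..<n}" "j \<in> {..<n}"
    then show "(\<integral>x. h (x i) * h (x j) \<partial>P) = (if j = i then (\<integral>y. (h y)^2 \<partial>D) else 0)"
      using marg[OF hh, of i] cross[OF h h, of i j] h0 by (auto simp: power2_eq_square)
  qed
  also have "\<dots> = real n * (\<integral>y. (h y)^2 \<partial>D)" by simp
  finally show "(\<integral>x. (\<Sum>i<n. h (x i))^2 \<partial>P) = real n * (\<integral>y. (h y)^2 \<partial>D)" .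
qed

end



lemma amgm:
  fixes z l :: real assumes l: "l > 0"
  shows "max 0 z \<le> z^2 / (4*l) + l/4 + z/2"
proof -
  have a: "0 \<le> (z-l)^2" "0 \<le> (z+l)^2" by simp_all
  have e1: "(z-l)^2 = z^2 + l*l - 2*z*l" by (simp add: power2_eq_square algebra_simps)
  have e2: "(z+l)^2 = z^2 + l*l + 2*z*l" by (simp add: power2_eq_square algebra_simps)
  have b1: "2*z*l \<le> z^2 + l*l" using a(1) e1 by linarith
  have b2: "0 \<le> z^2 + l*l + 2*z*l" using a(2) e2 by linarith
  have "max 0 z * (4*l) \<le> z^2 + l*l + 2*z*l"
  proof (cases "z \<ge> 0")
    case True
    then have "max 0 z * (4*l) = 2*(2*z*l)" by (simp add: algebra_simps)
    then show ?thesis using b1 by linarith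
  next
    case False
    then show ?thesis using b2 by simp
  qed
  moreover have l4: "0 < 4*l" using l by simp
  ultimately have "max 0 z \<le> (z^2 + l*l + 2*z*l) / (4*l)" using iffD2[OF pos_le_divide_eq[OF l4]] by blast
  also have "(z^2 + l*l + 2*z*l) / (4*l) = z^2 / (4*l) + l/4 + z/2" using l by (simp add: field_simps)
  finally show ?thesis .
qed

lemma geom: "(\<Sum>m\<in>{1..M}. (1/2::real)^m) = 1 - (1/2)^M"
  by (induction M) (auto simp: atLeastAtMostSuc_conv field_simps)

lemma pow4: "real n \<le> 4^n"
proof -
  have "n < 2^n" by (rule less_exp)
  also have "(2::nat)^n \<le> 4^n" by (rule power_mono) auto
  finally have "n \<le> 4^n" by simp
  then have "real n \<le> real (4^n)" by (rule of_nat_mono)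
  then show ?thesis by simp
qed

lemma gQ_meas: "gQ Q \<in> borel_measurable borel"
  unfolding gQ_def by measurable

context Dsetup
begin

lemma main:
  assumes nn: "AE x in D. x \<ge> 0" and intx: "integrable D (\<lambda>x. x)" and mean: "integral\<^sup>L D (\<lambda>x. x) = 1"
    and n: "n \<ge> 1"
  shows "(\<integral>x. real (removal_number n x) \<partial>P) \<le> 5 * sqrt (real n)"
proof -
  interpret DP: prob_space D by (rule D)
  interpret PP: prob_space P by (rule probP)
  define M where "M = n"
  have M1: "M \<ge> 1" using n by (simp add: M_def)
  define c where "c m = (\<integral>y. gQ (4^m) y \<partial>D)" for m :: nat
  have gb: "\<bar>gQ (4^m) y\<bar> \<le> 4^m" for m y by (simp add: gQ_def)
  have gnn: "0 \<le> gQ (4^m) y" "gQ (4^m) y \<le> 4^m" for m y by (auto simp: gQ_def)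
  have gint: "integrable D (gQ (4^m))" for m
    by (rule bounded_int[OF D meas_D[OF gQ_meas] gb])
  have gint2: "integrable D (\<lambda>y. (gQ (4^m) y)^2)" for m
    by (rule bounded_int[OF D _, where K="4^m*4^m"])
       (use meas_D[OF gQ_meas] in simp, simp add: power2_eq_square abs_mult mult_mono gnn)
  have c_le: "c m \<le> 1" for m
  proof -
    have "c m \<le> (\<integral>y. y \<partial>D)" unfolding c_def
      by (rule integral_mono_AE[OF gint intx]) (use nn in \<open>auto simp: gQ_def\<close>)
    then show ?thesis using mean by simp
  qed
  have c_ge: "c m \<ge> 0" for m unfolding c_def using gnn by simp
  define h where "h m y = gQ (4^m) y - c m" for m y
  have h_meas: "h m \<in> borel_measurable borel" for m unfolding h_def using gQ_meas by simp
  have hb: "\<bar>h m y\<bar> \<le> 4^m + 1" for m y using gnn[of m y] c_le[of m] c_ge[of m] by (simp add: h_def)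
  have h0: "(\<integral>y. h m y \<partial>D) = 0" for m unfolding h_def using gint by (simp add: c_def DP.prob_space)
  have v_le: "(\<integral>y. (h m y)^2 \<partial>D) \<le> 4^m" for m
  proof -
    have "(\<integral>y. (h m y)^2 \<partial>D) = (\<integral>y. 1 * (gQ (4^m) y)^2 + (c m)^2 + (-2 * c m) * gQ (4^m) y \<partial>D)"
      unfolding h_def by (rule Bochner_Integration.integral_cong) (auto simp: power2_eq_square algebra_simps)
    also have "\<dots> = (\<integral>y. (gQ (4^m) y)^2 \<partial>D) - (c m)^2"
      by (subst int_quad[OF D gint gint2]) (simp add: c_def power2_eq_square)
    also have "\<dots> \<le> (\<integral>y. (gQ (4^m) y)^2 \<partial>D)" by simp
    also have "\<dots> \<le> (\<integral>y. 4^m * gQ (4^m) y \<partial>D)"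
      by (rule integral_mono[OF gint2]) (use gint gnn in \<open>auto simp: power2_eq_square mult_right_mono\<close>)
    also have "\<dots> = 4^m * c m" by (simp add: c_def)
    also have "\<dots> \<le> 4^m" using c_le[of m] by simp
    finally show ?thesis .
  qed
  define Z where "Z m x = (\<Sum>i<n. gQ (4^m) (x i) - c m)" for m x
  have Zh: "Z m x = (\<Sum>i<n. h m (x i))" for m x by (simp add: Z_def h_def)
  note SS = sumsq[OF h_meas hb h0]
  have EZ2: "(\<integral>x. (Z m x)^2 \<partial>P) \<le> real n * 4^m" for m
    unfolding Zh SS(1) using v_le[of m] by (simp add: mult_left_mono)
  have EZ: "(\<integral>x. Z m x \<partial>P) = 0" for m unfolding Zh using SS(2) .
  have iZ2: "integrable P (\<lambda>x. (Z m x)^2)" for m unfolding Zh using SS(3) .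
  have iZ: "integrable P (\<lambda>x. Z m x)" for m unfolding Zh using SS(4) .
  define l where "l m = sqrt (real n) * 2^m" for m :: nat
  have sn: "sqrt (real n) > 0" using n by simp
  have lpos: "l m > 0" for m using sn by (simp add: l_def)
  define A where "A m x = 1 / (4^m * l m) * (Z m x)^2 + l m / 4^m + 2 / 4^m * Z m x" for m x
  have iA: "integrable P (A m)" for m
    unfolding A_def using iZ iZ2 by auto
  have EA: "(\<integral>x. A m x \<partial>P) \<le> 2 * sqrt (real n) / 2^m" for m
  proof -
    have "(\<integral>x. A m x \<partial>P) = 1 / (4^m * l m) * (\<integral>x. (Z m x)^2 \<partial>P) + l m / 4^m"
      unfolding A_def by (subst int_quad[OF probP iZ iZ2]) (simp add: EZ)
    also have "\<dots> \<le> 1 / (4^m * l m) * (real n * 4^m) + l m / 4^m"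
      using EZ2[of m] lpos[of m] by (intro add_right_mono mult_left_mono) auto
    also have "\<dots> = 2 * sqrt (real n) / 2^m"
    proof -
      have "(4::real)^m = 2^m * 2^m" by (simp add: power_mult_distrib[symmetric])
      moreover have "real n = sqrt (real n) * sqrt (real n)" by simp
      ultimately show ?thesis using sn unfolding l_def by (simp add: field_simps)
    qed
    finally show ?thesis .
  qed
  define t where "t y = min (max y 0 / 4^M) (1::real)" for y
  have t_meas: "t \<in> borel_measurable borel" unfolding t_def by measurable
  have tb: "\<bar>t y\<bar> \<le> 1" for y by (simp add: t_def)
  have it: "integrable D t" by (rule bounded_int[OF D meas_D[OF t_meas] tb])
  have Et: "(\<integral>y. t y \<partial>D) \<le> 1 / 4^M"
  proof -
    have "(\<integral>y. t y \<partial>D) \<le> (\<integral>y. y / 4^M \<partial>D)"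
      by (rule integral_mono_AE[OF it]) (use intx nn in \<open>auto simp: t_def divide_right_mono\<close>)
    also have "\<dots> = 1 / 4^M" using mean by simp
    finally show ?thesis .
  qed
  have itP: "integrable P (\<lambda>x. t (x i))" if "i < n" for i
    by (rule bounded_int[OF probP meas_comp[OF t_meas that] tb])
  define R where "R x = 1 + (\<Sum>m\<in>{1..M}. A m x) + (\<Sum>i<n. t (x i))" for x
  have iR: "integrable P R" unfolding R_def
    using iA itP by (intro Bochner_Integration.integrable_add Bochner_Integration.integrable_sum) auto
  have ptw: "real (removal_number n x) \<le> R x" for x
  proof -
    have "real (removal_number n x) \<le> 1 + ((\<Sum>m\<in>{1..M}. 4 / 4^m * max 0 (Z m x)) + (\<Sum>i<n. t (x i)))"
      using pointwise[OF n M1 c_le, of x] by (simp add: Z_def t_def)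
    also have "(\<Sum>m\<in>{1..M}. 4 / 4^m * max 0 (Z m x)) \<le> (\<Sum>m\<in>{1..M}. A m x)"
    proof (intro sum_mono)
      fix m
      have "4 / 4^m * max 0 (Z m x) \<le> 4 / 4^m * ((Z m x)^2 / (4 * l m) + l m / 4 + Z m x / 2)"
        using amgm[OF lpos[of m]] by (intro mult_left_mono) auto
      also have "\<dots> = A m x" unfolding A_def using lpos[of m] by (simp add: field_simps)
      finally show "4 / 4^m * max 0 (Z m x) \<le> A m x" .
    qed
    finally show ?thesis by (simp add: R_def)
  qed
  have ER: "(\<integral>x. R x \<partial>P) \<le> 5 * sqrt (real n)"
  proof -
    have i1: "integrable P (\<lambda>x. (\<Sum>m\<in>{1..M}. A m x))"
      by (rule Bochner_Integration.integrable_sum) (rule iA)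
    have i2: "integrable P (\<lambda>x. (\<Sum>i<n. t (x i)))"
      by (rule Bochner_Integration.integrable_sum) (rule itP, simp)
    have i0: "integrable P (\<lambda>x. 1 + (\<Sum>m\<in>{1..M}. A m x))"
      by (rule Bochner_Integration.integrable_add[OF PP.integrable_const i1])
    have "(\<integral>x. R x \<partial>P) = (\<integral>x. 1 + (\<Sum>m\<in>{1..M}. A m x) \<partial>P) + (\<integral>x. (\<Sum>i<n. t (x i)) \<partial>P)"
      unfolding R_def by (rule Bochner_Integration.integral_add[OF i0 i2])
    also have "(\<integral>x. 1 + (\<Sum>m\<in>{1..M}. A m x) \<partial>P) = (\<integral>x. 1 \<partial>P) + (\<integral>x. (\<Sum>m\<in>{1..M}. A m x) \<partial>P)"
      by (rule Bochner_Integration.integral_add[OF PP.integrable_const i1])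
    also have "(\<integral>x. (1::real) \<partial>P) = 1" by (simp add: PP.prob_space)
    also have "(\<integral>x. (\<Sum>m\<in>{1..M}. A m x) \<partial>P) = (\<Sum>m\<in>{1..M}. \<integral>x. A m x \<partial>P)"
      by (rule Bochner_Integration.integral_sum) (rule iA)
    also have "(\<integral>x. (\<Sum>i<n. t (x i)) \<partial>P) = (\<Sum>i<n. \<integral>x. t (x i) \<partial>P)"
      by (rule Bochner_Integration.integral_sum) (rule itP, simp)
    also have "(\<Sum>i<n. \<integral>x. t (x i) \<partial>P) = (\<Sum>i<n. \<integral>y. t y \<partial>D)"
      by (rule sum.cong[OF refl]) (rule marg[OF t_meas], simp)
    also have "\<dots> = real n * (\<integral>y. t y \<partial>D)" by simp
    also have "\<dots> \<le> real n * (1 / 4^M)" using Et by (rule mult_left_mono) simp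
    also have "\<dots> \<le> 1"
    proof -
      have "real n \<le> 4^M" using pow4[of n] by (simp add: M_def)
      then show ?thesis by (simp add: field_simps)
    qed
    also have "(\<Sum>m\<in>{1..M}. \<integral>x. A m x \<partial>P) \<le> (\<Sum>m\<in>{1..M}. 2 * sqrt (real n) * (1/2)^m)"
    proof (rule sum_mono)
      fix m
      have "2 * sqrt (real n) / 2^m = 2 * sqrt (real n) * (1/2)^m" by (simp add: power_one_over)
      then show "(\<integral>x. A m x \<partial>P) \<le> 2 * sqrt (real n) * (1/2)^m" using EA[of m] by simp
    qed
    also have "\<dots> = 2 * sqrt (real n) * (\<Sum>m\<in>{1..M}. (1/2)^m)" by (rule sum_distrib_left[symmetric])
    also have "\<dots> = 2 * sqrt (real n) * (1 - (1/2)^M)" by (simp only: geom)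
    also have "\<dots> \<le> 2 * sqrt (real n) * 1"
      using sn by (intro mult_left_mono) auto
    finally have "(\<integral>x. R x \<partial>P) \<le> 1 + 2 * sqrt (real n) * 1 + 1" by simp
    moreover have "1 \<le> sqrt (real n)" using n by simp
    ultimately show ?thesis by linarith
  qed
  show ?thesis
  proof (cases "integrable P (\<lambda>x. real (removal_number n x))")
    case True
    have "(\<integral>x. real (removal_number n x) \<partial>P) \<le> (\<integral>x. R x \<partial>P)"
      by (rule integral_mono[OF True iR ptw])
    then show ?thesis using ER by simp
  next
    case False
    then show ?thesis by (simp add: not_integrable_integral_eq)
  qed
qed

end


theorem mainTheorem14:
  fixes D :: "real measure" and n :: nat
  assumes "prob_space D"
    and "sets D = sets borel"
    and "AE x in D. x \<ge> 0"
    and "integrable D (\<lambda>x. x)"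
    and "integral\<^sup>L D (\<lambda>x. x) = 1"
    and "n \<ge> 1"
  shows "(\<integral>x. real (removal_number n x) \<partial>(PiM {..<n} (\<lambda>_. D))) \<le> 5 * sqrt (real n)"
proof -
  show ?thesis using Dsetup.main[OF Dsetup.intro[OF assms(1,2)] assms(3-6)] .
qed

end
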